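(* Let $X,X_1$ be i.i.d. positive random variables with $\mathbb{E}X=1$, let $p\ge2$ be an integer and let $1<\alpha\le p+2$. Suppose $\mathbb{P}\{X\ge x\}=O(x^{-p-\alpha})$ as $x\to\infty$. Then, as $n\to\infty$, $$\mathbb{E}\frac{X_1^{2p}}{\left(\frac1nX_1+1\right)^{p+1}}=O(n^{p-\alpha+2})$$ and $$\mathbb{E}\frac{X_1^{2p}}{\left(\frac1nX_1+1\right)^{p+1}}X_1^2=O(n^{p-\alpha+2}\log n).$$ *)

theory Defs
  imports "HOL-Probability.Probability" "HOL-Library.Landau_Symbols"
begin

end

theory Submission
  imports Defs
begin


lemma vK_bound:
  fixes b q N :: real and K :: nat
  assumes "b < q" "N \<ge> 1" "N \<le> 2^K"
  shows "(2 powr (b-q))^K \<le> N powr (b-q)"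
proof -
  have "(2 powr (b-q))^K = (2^K) powr (b-q)"
    by (simp add: powr_realpow[symmetric] powr_powr mult.commute)
  also have "\<dots> \<le> N powr (b-q)"
    by (rule powr_mono2') (use assms in auto)
  finally show ?thesis .
qed

lemma shell_pointwise:
  fixes y N :: real and a b :: nat
  assumes "y > 0" "N \<ge> 1"
  defines "\<phi> \<equiv> (\<lambda>y. min y N ^ a * y ^ b)"
  shows "ennreal (\<phi> y) \<le> 1 + (\<Sum>k. ennreal (\<phi> (2^(k+1))) * indicator {x. x \<ge> 2^k} y)"
proof (cases "y < 1")
  case True
  have "min y N ^ a \<le> 1" by (intro power_le_one) (use assms True in auto)
  moreover have "y ^ b \<le> 1" using True assms(1) by (simp add: power_le_one)
  ultimately have "\<phi> y \<le> 1" unfolding \<phi>_def using assms(1)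
    by (metis less_eq_real_def min.cobounded1 mult_le_one order_trans zero_le_power)
  then have "ennreal (\<phi> y) \<le> 1" by (simp add: ennreal_le_1)
  also have "(1::ennreal) \<le> 1 + (\<Sum>k. ennreal (\<phi> (2^(k+1))) * indicator {x. x \<ge> 2^k} y)" by simp
  finally show ?thesis .
next
  case False
  define k where "k = nat \<lfloor>log 2 y\<rfloor>"
  have lg: "log 2 y \<ge> 0" using False by simp
  have k1: "real k \<le> log 2 y" unfolding k_def using lg by linarith
  have k2: "log 2 y < real k + 1" unfolding k_def using lg by linarith
  have "2^k \<le> y"
  proof -
    have "(2::real)^k = 2 powr real k" by (simp add: powr_realpow)
    also have "\<dots> \<le> 2 powr log 2 y" using k1 by simp
    also have "\<dots> = y" using assms(1) by simp
    finally show ?thesis .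
  qed
  have "y < 2^(k+1)"
  proof -
    have "y = 2 powr log 2 y" using assms(1) by simp
    also have "\<dots> < 2 powr (real k + 1)" using k2 by simp
    also have "\<dots> = 2^(k+1)" by (simp add: powr_realpow[symmetric] powr_add)
    finally show ?thesis .
  qed
  have "\<phi> y \<le> \<phi> (2^(k+1))" unfolding \<phi>_def
    using \<open>y < 2^(k+1)\<close> assms(1,2)
    by (intro mult_mono power_mono) auto
  then have "ennreal (\<phi> y) \<le> ennreal (\<phi> (2^(k+1))) * indicator {x. x \<ge> 2^k} y"
    using \<open>2^k \<le> y\<close> by (simp add: ennreal_leI)
  also have "\<dots> \<le> (\<Sum>k. ennreal (\<phi> (2^(k+1))) * indicator {x. x \<ge> 2^k} y)"
    proof -
    have "F k \<le> suminf F" for F :: "nat \<Rightarrow> ennreal"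
      using sum_le_suminf[OF summableI, where f=F and I="{k}"] by simp
    then show ?thesis .
  qed
  also have "\<dots> \<le> 1 + (\<Sum>k. ennreal (\<phi> (2^(k+1))) * indicator {x. x \<ge> 2^k} y)" by simp
  finally show ?thesis .
qed

lemma shell_bound:
  fixes M :: "'a measure" and Y :: "'a \<Rightarrow> real" and a b :: nat and C q N :: real and K :: nat
  assumes P: "prob_space M" and Ym: "Y \<in> borel_measurable M" and Ypos: "\<forall>\<omega>\<in>space M. Y \<omega> > 0"
    and tail: "\<And>k::nat. measure M {\<omega>\<in>space M. Y \<omega> \<ge> 2^k} \<le> C * (2 powr (-q))^k"
    and bq: "real b < q" and N1: "N \<ge> 1" and C0: "C \<ge> 0" and K: "N \<le> 2^K"
    and fm: "f \<in> borel_measurable M"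
    and fb: "\<And>\<omega>. \<omega> \<in> space M \<Longrightarrow> 0 \<le> f \<omega> \<and> f \<omega> \<le> min (Y \<omega>) N ^ a * Y \<omega> ^ b"
  shows "(\<integral>\<omega>. f \<omega> \<partial>M) \<le> 1 + (\<Sum>k<K. C * 2^(a+b) * (2 powr (real (a+b) - q))^k) + C * N^a * 2^b * N powr (real b - q) / (1 - 2 powr (real b - q))"
proof -
  interpret prob_space M by (rule P)
  have [measurable]: "Y \<in> borel_measurable M" by (rule Ym)
  define \<phi> where "\<phi> y = min y N ^ a * y ^ b" for y
  define u where "u = 2 powr (-q)"
  define w where "w = 2 powr (real (a+b) - q)"
  define v where "v = 2 powr (real b - q)"
  define h where "h k = (if k < K then C * 2^(a+b) * w^k else C * N^a * 2^b * v^k)" for k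
  define g where "g k = \<phi> (2^(k+1)) * (C * u^k)" for k :: nat
  define A where "A k = {\<omega>\<in>space M. Y \<omega> \<ge> 2^k}" for k :: nat
  have A[measurable]: "A k \<in> sets M" for k unfolding A_def by measurable
  have wu: "2^(a+b) * u = w" unfolding u_def w_def
    by (simp add: powr_realpow[symmetric] powr_add[symmetric])
  have vu: "2^b * u = v" unfolding u_def v_def
    by (simp add: powr_realpow[symmetric] powr_add[symmetric])
  have u0: "u > 0" "v > 0" "w > 0" unfolding u_def v_def w_def by auto
  have v1: "v < 1" unfolding v_def using bq powr_less_cancel_iff[of 2 "real b - q" 0] by simp
  have g0: "0 \<le> g k" for k unfolding g_def \<phi>_def using C0 N1 u0 by simp
  have gh: "g k \<le> h k" for k
  proof (cases "k < K")
    case True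
    have "g k \<le> ((2::real)^(k+1))^a * (2^(k+1))^b * (C * u^k)" unfolding g_def \<phi>_def
      using C0 u0 N1 by (intro mult_right_mono mult_mono power_mono) auto
    also have "\<dots> = C * 2^(a+b) * (2^(a+b) * u)^k"
      by (simp add: power_add power_mult_distrib power_mult[symmetric] algebra_simps)
    finally show ?thesis using True wu by (simp add: h_def)
  next
    case False
    have "g k \<le> N^a * (2^(k+1))^b * (C * u^k)" unfolding g_def \<phi>_def
      using C0 u0 N1 by (intro mult_right_mono mult_mono power_mono) auto
    also have "\<dots> = C * N^a * 2^b * (2^b * u)^k"
      by (simp add: power_add power_mult_distrib power_mult[symmetric] algebra_simps)
    finally show ?thesis using False vu by (simp add: h_def)
  qed
  have hs: "summable (\<lambda>n. h (n + K))"
    unfolding h_def using u0 v1 by (simp add: power_add summable_geometric summable_mult2 summable_mult)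
  then have hsum: "summable h" by (simp add: summable_iff_shift)
  have "suminf h = (\<Sum>n. h (n + K)) + sum h {..<K}"
    by (rule suminf_split_initial_segment[OF hsum])
  also have "(\<Sum>n. h (n + K)) = C * N^a * 2^b * v^K / (1 - v)"
  proof -
    have "(\<Sum>n. h (n + K)) = (\<Sum>n. (C * N^a * 2^b * v^K) * v^n)"
      unfolding h_def by (simp add: power_add algebra_simps)
    also have "\<dots> = (C * N^a * 2^b * v^K) * (\<Sum>n. v^n)"
      using u0 v1 by (intro suminf_mult summable_geometric) auto
    also have "\<dots> = C * N^a * 2^b * v^K / (1 - v)"
      using u0 v1 by (simp add: suminf_geometric)
    finally show ?thesis .
  qed
  also have "sum h {..<K} = (\<Sum>k<K. C * 2^(a+b) * w^k)"
    unfolding h_def by simp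
  finally have hval: "suminf h = C * N^a * 2^b * v^K / (1 - v) + (\<Sum>k<K. C * 2^(a+b) * w^k)" .
  have h0: "0 \<le> h k" for k using g0[of k] gh[of k] by linarith
  have pw: "ennreal (\<phi> (Y \<omega>)) \<le> 1 + (\<Sum>k. ennreal (\<phi> (2^(k+1))) * indicator (A k) \<omega>)"
    if "\<omega> \<in> space M" for \<omega>
  proof -
    have "indicator (A k) \<omega> = (indicator {x. x \<ge> 2^k} (Y \<omega>) :: ennreal)" for k
      using that by (simp add: A_def indicator_def)
    then show ?thesis
      using shell_pointwise[of "Y \<omega>" N a b] Ypos that N1 by (simp add: \<phi>_def)
  qed
  have "(\<integral>\<^sup>+\<omega>. ennreal (\<phi> (Y \<omega>)) \<partial>M) \<le> (\<integral>\<^sup>+\<omega>. (1 + (\<Sum>k. ennreal (\<phi> (2^(k+1))) * indicator (A k) \<omega>)) \<partial>M)"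
    by (rule nn_integral_mono) (rule pw)
  also have "\<dots> = (\<integral>\<^sup>+\<omega>. 1 \<partial>M) + (\<integral>\<^sup>+\<omega>. (\<Sum>k. ennreal (\<phi> (2^(k+1))) * indicator (A k) \<omega>) \<partial>M)"
    by (rule nn_integral_add) measurable
  also have "(\<integral>\<^sup>+\<omega>. 1 \<partial>M) = 1" by (simp add: emeasure_space_1)
  also have "(\<integral>\<^sup>+\<omega>. (\<Sum>k. ennreal (\<phi> (2^(k+1))) * indicator (A k) \<omega>) \<partial>M)
      = (\<Sum>k. (\<integral>\<^sup>+\<omega>. ennreal (\<phi> (2^(k+1))) * indicator (A k) \<omega> \<partial>M))"
    by (rule nn_integral_suminf) measurable
  also have "\<dots> = (\<Sum>k. ennreal (\<phi> (2^(k+1))) * emeasure M (A k))"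
    by (simp add: nn_integral_cmult_indicator)
  also have "\<dots> \<le> (\<Sum>k. ennreal (h k))"
  proof (rule suminf_le[OF _ summableI summableI])
    fix k
    have "ennreal (\<phi> (2^(k+1))) * emeasure M (A k) = ennreal (\<phi> (2^(k+1))) * ennreal (measure M (A k))"
      by (simp add: emeasure_eq_measure)
    also have "\<dots> \<le> ennreal (\<phi> (2^(k+1))) * ennreal (C * u^k)"
      using tail[of k] by (intro mult_left_mono ennreal_leI) (auto simp: A_def u_def)
    also have "\<dots> = ennreal (g k)"
      unfolding g_def using C0 u0 N1 by (simp add: ennreal_mult \<phi>_def)
    also have "\<dots> \<le> ennreal (h k)" using gh by (simp add: ennreal_leI)
    finally show "ennreal (\<phi> (2^(k+1))) * emeasure M (A k) \<le> ennreal (h k)" .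
  qed
  also have "(\<Sum>k. ennreal (h k)) = ennreal (suminf h)"
    by (rule suminf_ennreal2[OF h0 hsum])
  finally have nn: "(\<integral>\<^sup>+\<omega>. ennreal (\<phi> (Y \<omega>)) \<partial>M) \<le> 1 + ennreal (suminf h)"
    by (simp add: add_left_mono)
  have "(\<integral>\<^sup>+\<omega>. ennreal (f \<omega>) \<partial>M) \<le> (\<integral>\<^sup>+\<omega>. ennreal (\<phi> (Y \<omega>)) \<partial>M)"
    by (rule nn_integral_mono) (use fb in \<open>auto simp: \<phi>_def intro: ennreal_leI\<close>)
  note nn2 = order_trans[OF this nn]
  have "(\<integral>\<omega>. f \<omega> \<partial>M) = enn2real (\<integral>\<^sup>+\<omega>. ennreal (f \<omega>) \<partial>M)"
    by (rule integral_eq_nn_integral) (use fm fb in \<open>auto intro!: AE_I2\<close>)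
  also have "\<dots> \<le> enn2real (1 + ennreal (suminf h))"
    by (rule enn2real_mono[OF nn2]) simp
  also have "\<dots> = 1 + suminf h"
    using suminf_nonneg[OF hsum h0] by (simp add: enn2real_plus)
  also have "\<dots> \<le> 1 + (\<Sum>k<K. C * 2^(a+b) * (2 powr (real (a+b) - q))^k) + C * N^a * 2^b * N powr (real b - q) / (1 - 2 powr (real b - q))"
  proof -
    have "v^K \<le> N powr (real b - q)" unfolding v_def by (rule vK_bound) (use bq N1 K in auto)
    then have "C * N^a * 2^b * v^K / (1 - v) \<le> C * N^a * 2^b * N powr (real b - q) / (1 - v)"
      using v1 C0 N1 by (intro divide_right_mono mult_left_mono) auto
    then show ?thesis unfolding hval by (simp add: w_def v_def)
  qed
  finally show ?thesis .
qed
lemma G_bound: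
  fixes s :: real
  obtains c where "c > 0" "\<And>N K. N \<ge> 1 \<Longrightarrow> (2::real)^K \<le> 2*N \<Longrightarrow> real K \<le> log 2 N + 1 \<Longrightarrow>
     (\<Sum>k<K. (2 powr s)^k) \<le> c * (if s < 0 then 1 else N powr s * (log 2 N + 1))"
proof -
  define w where "w = 2 powr s"
  have w0: "w > 0" unfolding w_def by simp
  consider "s < 0" | "s = 0" | "s > 0" by linarith
  then show ?thesis
  proof cases
    case 1
    have w1: "w < 1" unfolding w_def using 1 powr_less_cancel_iff[of 2 s 0] by simp
    show ?thesis
    proof (rule that[of "1/(1-w)"])
      show "0 < 1/(1-w)" using w1 by simp
      fix N :: real and K :: nat
      have "(\<Sum>k<K. w^k) = (1 - w^K)/(1-w)" using w1 by (simp add: sum_gp_strict)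
      also have "\<dots> \<le> 1/(1-w)" using w1 w0 by (intro divide_right_mono) auto
      finally show "(\<Sum>k<K. (2 powr s)^k) \<le> 1/(1-w) * (if s < 0 then 1 else N powr s * (log 2 N + 1))"
        using 1 by (simp add: w_def)
    qed
  next
    case 2
    show ?thesis
    proof (rule that[of 1])
      fix N :: real and K :: nat
      assume "N \<ge> 1" "real K \<le> log 2 N + 1"
      then show "(\<Sum>k<K. (2 powr s)^k) \<le> 1 * (if s < 0 then 1 else N powr s * (log 2 N + 1))"
        using 2 by simp
    qed simp
  next
    case 3
    have w1: "w > 1" unfolding w_def using 3 powr_less_cancel_iff[of 2 0 s] by simp
    show ?thesis
    proof (rule that[of "2 powr s / (w - 1)"])
      show "0 < 2 powr s / (w - 1)" using w1 by simp
      fix N :: real and K :: nat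
      assume N1: "N \<ge> 1" and K2: "(2::real)^K \<le> 2*N" and K3: "real K \<le> log 2 N + 1"
      have "(\<Sum>k<K. w^k) = (1 - w^K)/(1-w)" using w1 by (simp add: sum_gp_strict)
      also have "\<dots> = (w^K - 1)/(w-1)" using w1 by (simp add: field_simps)
      also have "\<dots> \<le> w^K/(w-1)" using w1 by (intro divide_right_mono) auto
      also have "w^K = (2^K) powr s" unfolding w_def
        by (simp add: powr_realpow[symmetric] powr_powr mult.commute)
      also have "(2^K) powr s \<le> (2*N) powr s" using K2 3 by (intro powr_mono2) auto
      also have "(2*N) powr s = 2 powr s * N powr s" using N1 by (simp add: powr_mult)
      finally have "(\<Sum>k<K. w^k) \<le> 2 powr s / (w - 1) * N powr s"
        using w1 by (simp add: divide_right_mono)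
      also have "\<dots> \<le> 2 powr s / (w - 1) * (N powr s * (log 2 N + 1))"
        using w1 N1 by (intro mult_left_mono) auto
      finally show "(\<Sum>k<K. (2 powr s)^k) \<le> 2 powr s / (w - 1) * (if s < 0 then 1 else N powr s * (log 2 N + 1))"
        using 3 by (simp add: w_def)
    qed
  qed
qed
lemma main_bound:
  fixes M :: "'a measure" and Y :: "'a \<Rightarrow> real" and a b :: nat and C q :: real
  assumes P: "prob_space M" and Ym: "Y \<in> borel_measurable M" and Ypos: "\<forall>\<omega>\<in>space M. Y \<omega> > 0"
    and tail: "\<And>k::nat. measure M {\<omega>\<in>space M. Y \<omega> \<ge> 2^k} \<le> C * (2 powr (-q))^k"
    and bq: "real b < q" and C0: "C \<ge> 0"
  obtains D where "D > 0" "\<And>(n::nat) (f::'a\<Rightarrow>real). n \<ge> 1 \<Longrightarrow> f \<in> borel_measurable M \<Longrightarrow>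
     (\<And>\<omega>. \<omega> \<in> space M \<Longrightarrow> 0 \<le> f \<omega> \<and> f \<omega> \<le> min (Y \<omega>) (real n) ^ a * Y \<omega> ^ b) \<Longrightarrow>
     (\<integral>\<omega>. f \<omega> \<partial>M) \<le> D * (1 + (if real (a+b) - q < 0 then 1 else real n powr (real (a+b) - q) * (log 2 (real n) + 1))
        + real n powr (real (a+b) - q))"
proof -
  define s where "s = real (a+b) - q"
  define v where "v = 2 powr (real b - q)"
  have v0: "v > 0" unfolding v_def by simp
  have v1: "v < 1" unfolding v_def using bq powr_less_cancel_iff[of 2 "real b - q" 0] by simp
  obtain c where c0: "c > 0" and cG: "\<And>N K. N \<ge> 1 \<Longrightarrow> (2::real)^K \<le> 2*N \<Longrightarrow> real K \<le> log 2 N + 1 \<Longrightarrow>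
     (\<Sum>k<K. (2 powr s)^k) \<le> c * (if s < 0 then 1 else N powr s * (log 2 N + 1))"
    using G_bound[of s] by blast
  define D where "D = 1 + C * 2^(a+b) * c + C * 2^b / (1 - v)"
  have D1: "D \<ge> 1" "C * 2^(a+b) * c \<le> D" "C * 2^b / (1 - v) \<le> D"
    unfolding D_def using C0 c0 v1 by auto
  show ?thesis
  proof (rule that[of D])
    show "D > 0" using D1 by simp
    fix n :: nat and f :: "'a \<Rightarrow> real"
    assume n1: "n \<ge> 1" and fm: "f \<in> borel_measurable M"
      and fb: "\<And>\<omega>. \<omega> \<in> space M \<Longrightarrow> 0 \<le> f \<omega> \<and> f \<omega> \<le> min (Y \<omega>) (real n) ^ a * Y \<omega> ^ b"
    define N where "N = real n"
    have N1: "N \<ge> 1" unfolding N_def using n1 by simp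
    define K where "K = nat \<lceil>log 2 N\<rceil>"
    have lg: "log 2 N \<ge> 0" using N1 by simp
    have K1: "log 2 N \<le> real K" unfolding K_def using lg by linarith
    have K2: "real K < log 2 N + 1" unfolding K_def using lg by linarith
    have NK: "N \<le> 2^K"
    proof -
      have "N = 2 powr log 2 N" using N1 by simp
      also have "\<dots> \<le> 2 powr real K" using K1 by simp
      also have "\<dots> = 2^K" by (simp add: powr_realpow)
      finally show ?thesis .
    qed
    have NK2: "(2::real)^K \<le> 2*N"
    proof -
      have "(2::real)^K = 2 powr real K" by (simp add: powr_realpow)
      also have "\<dots> \<le> 2 powr (log 2 N + 1)" using K2 by simp
      also have "\<dots> = 2 * N" using N1 by (simp add: powr_add)
      finally show ?thesis .
    qed
    define T where "T = (if s < 0 then 1 else N powr s * (log 2 N + 1))"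
    have T0: "T \<ge> 0" unfolding T_def using lg by auto
    have "(\<integral>\<omega>. f \<omega> \<partial>M) \<le> 1 + (\<Sum>k<K. C * 2^(a+b) * (2 powr (real (a+b) - q))^k) + C * N^a * 2^b * N powr (real b - q) / (1 - 2 powr (real b - q))"
      by (rule shell_bound[OF P Ym Ypos tail bq N1 C0 NK fm]) (use fb in \<open>simp add: N_def\<close>)
    also have "(\<Sum>k<K. C * 2^(a+b) * (2 powr (real (a+b) - q))^k) = C * 2^(a+b) * (\<Sum>k<K. (2 powr s)^k)"
      by (simp add: sum_distrib_left s_def)
    also have "\<dots> \<le> C * 2^(a+b) * (c * T)"
      unfolding T_def using C0 cG[OF N1 NK2] K2 by (intro mult_left_mono) auto
    also have "C * N^a * 2^b * N powr (real b - q) / (1 - 2 powr (real b - q)) = (C * 2^b / (1 - v)) * N powr s"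
    proof -
      have e: "real a + (real b - q) = s" unfolding s_def by simp
      have "N^a * N powr (real b - q) = N powr (real a + (real b - q))" using N1
        by (simp add: powr_realpow[symmetric] powr_add[symmetric])
      then have "N^a * N powr (real b - q) = N powr s" unfolding e .
      then show ?thesis by (simp add: v_def algebra_simps)
    qed
    also have "1 + C * 2^(a+b) * (c * T) + (C * 2^b / (1 - v)) * N powr s \<le> D * 1 + D * T + D * N powr s"
      using D1 T0 by (intro add_mono mult_right_mono) (auto simp: mult.assoc[symmetric] intro: mult_right_mono)
    finally have "(\<integral>\<omega>. f \<omega> \<partial>M) \<le> D * (1 + T + N powr s)"
      by (simp add: algebra_simps)
    then show "(\<integral>\<omega>. f \<omega> \<partial>M) \<le> D * (1 + (if real (a+b) - q < 0 then 1 else real n powr (real (a+b) - q) * (log 2 (real n) + 1))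
        + real n powr (real (a+b) - q))"
      unfolding T_def N_def s_def .
  qed
qed

lemma pw1:
  fixes y N :: real and p :: nat
  assumes y: "y > 0" and N: "N > 0" and p: "p \<ge> 1"
  shows "y^(2*p) / (y/N+1)^(p+1) \<le> min y N ^ (p+1) * y^(p-1)"
proof -
  have yy: "y^(2*p) = y^(p+1) * y^(p-1)"
  proof -
    have "2*p = (p+1) + (p-1)" using p by simp
    then show ?thesis by (metis power_add)
  qed
  show ?thesis
  proof (cases "y \<le> N")
    case True
    have d: "(y/N+1)^(p+1) \<ge> 1" using y N by (intro one_le_power) auto
    have "y^(2*p) / (y/N+1)^(p+1) \<le> y^(2*p) / 1"
      using d y by (intro divide_left_mono) auto
    then show ?thesis using True yy by simp
  next
    case False
    have d: "(y/N+1)^(p+1) \<ge> (y/N)^(p+1)" using y N by (intro power_mono) auto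
    have "y^(2*p) / (y/N+1)^(p+1) \<le> y^(2*p) / (y/N)^(p+1)"
    proof (rule divide_left_mono[OF d])
      show "0 \<le> y^(2*p)" using y by simp
      show "0 < (y/N+1)^(p+1) * (y/N)^(p+1)" proof (intro mult_pos_pos)
        have "y/N + 1 > 0" using y N by (simp add: add_pos_pos)
        then show "0 < (y/N+1)^(p+1)" by (rule zero_less_power)
        show "0 < (y/N)^(p+1)" using y N by simp
      qed
    qed
    also have "\<dots> = N^(p+1) * y^(p-1)" using y N unfolding yy by (simp add: power_divide)
    finally show ?thesis using False by simp
  qed
qed

lemma pw2:
  fixes y N :: real and p :: nat
  assumes y: "y > 0" and N: "N > 0" and p: "p \<ge> 1"
  shows "y^(2*p) / (y/N+1)^(p+1) * y^2 \<le> min y N ^ (p+1) * y^(p+1)"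
proof -
  have "y^(2*p) / (y/N+1)^(p+1) * y^2 \<le> min y N ^ (p+1) * y^(p-1) * y^2"
    using pw1[OF assms] by (rule mult_right_mono) simp
  also have "\<dots> = min y N ^ (p+1) * y^(p+1)"
    using p by (simp add: mult.assoc power_add[symmetric])
  finally show ?thesis .
qed

lemma log2_bound:
  fixes N :: real assumes "N \<ge> 3"
  shows "log 2 N + 1 \<le> (1/ln 2 + 1) * ln N" "ln N \<ge> 1" "ln N \<le> N"
proof -
  have "ln N \<ge> ln (exp 1)" using assms exp_le by (subst ln_le_cancel_iff) auto
  then show l1: "ln N \<ge> 1" by simp
  have "log 2 N = (1/ln 2) * ln N" by (simp add: log_def)
  moreover have "1 \<le> ln N" by (rule l1)
  ultimately show "log 2 N + 1 \<le> (1/ln 2 + 1) * ln N" by (simp add: algebra_simps)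
  show "ln N \<le> N" using ln_le_minus_one[of N] assms by simp
qed

theorem lemma8:
  fixes M :: "'a measure" and X X1 :: "'a \<Rightarrow> real" and p :: nat and \<alpha> :: real
  assumes "prob_space M"
    and "X \<in> borel_measurable M" and "X1 \<in> borel_measurable M"
    and "prob_space.indep_var M borel X borel X1"
    and "distr M borel X = distr M borel X1"
    and "\<forall>\<omega>\<in>space M. X \<omega> > 0" and "\<forall>\<omega>\<in>space M. X1 \<omega> > 0"
    and "integrable M X" and "integral\<^sup>L M X = 1"
    and "p \<ge> 2" and "1 < \<alpha>" and "\<alpha> \<le> real p + 2"
    and "(\<lambda>x. measure M {\<omega>\<in>space M. X \<omega> \<ge> x}) \<in> O[at_top](\<lambda>x. x powr (-(real p + \<alpha>)))"
  shows "(\<lambda>n::nat. integral\<^sup>L M (\<lambda>\<omega>. X1 \<omega> ^ (2*p) / (X1 \<omega> / real n + 1) ^ (p+1)))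
           \<in> O[at_top](\<lambda>n. real n powr (real p - \<alpha> + 2)) \<and>
         (\<lambda>n::nat. integral\<^sup>L M (\<lambda>\<omega>. X1 \<omega> ^ (2*p) / (X1 \<omega> / real n + 1) ^ (p+1) * X1 \<omega> ^ 2))
           \<in> O[at_top](\<lambda>n. real n powr (real p - \<alpha> + 2) * ln (real n))"
proof -
  interpret prob_space M by (rule assms(1))
  have X1m[measurable]: "X1 \<in> borel_measurable M" by (rule assms(3))
  have Xm[measurable]: "X \<in> borel_measurable M" by (rule assms(2))
  define q where "q = real p + \<alpha>"
  have q0: "q > 0" using assms(11) by (simp add: q_def)
  have same: "measure M {\<omega>\<in>space M. X1 \<omega> \<ge> t} = measure M {\<omega>\<in>space M. X \<omega> \<ge> t}" for t
  proof -
    have "measure M {\<omega>\<in>space M. X1 \<omega> \<ge> t} = measure (distr M borel X1) {t..}"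
      by (subst measure_distr) (auto intro!: arg_cong[where f="measure M"])
    also have "\<dots> = measure (distr M borel X) {t..}" using assms(5) by simp
    also have "\<dots> = measure M {\<omega>\<in>space M. X \<omega> \<ge> t}"
      by (subst measure_distr) (auto intro!: arg_cong[where f="measure M"])
    finally show ?thesis .
  qed
  obtain c where c0: "c > 0" and ev: "eventually (\<lambda>x. norm (measure M {\<omega>\<in>space M. X \<omega> \<ge> x}) \<le> c * norm (x powr (-(real p + \<alpha>)))) at_top"
    using landau_o.bigE[OF assms(13)] by blast
  then obtain x0 where x0: "\<And>x. x \<ge> x0 \<Longrightarrow> norm (measure M {\<omega>\<in>space M. X \<omega> \<ge> x}) \<le> c * norm (x powr (-(real p + \<alpha>)))"
    by (auto simp: eventually_at_top_linorder)
  define x1 where "x1 = max x0 1"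
  have x11: "x1 \<ge> 1" unfolding x1_def by simp
  define C where "C = max c (x1 powr q)"
  have C0: "C \<ge> 0" unfolding C_def using c0 by simp
  have tail: "measure M {\<omega>\<in>space M. X1 \<omega> \<ge> 2^k} \<le> C * (2 powr (-q))^k" for k :: nat
  proof -
    define t :: real where "t = 2^k"
    have t0: "t > 0" unfolding t_def by simp
    have tq: "(2 powr (-q))^k = t powr (-q)" unfolding t_def
      by (simp add: powr_realpow[symmetric] powr_powr mult.commute)
    show ?thesis
    proof (cases "t \<ge> x1")
      case True
      then have "t \<ge> x0" unfolding x1_def by simp
      then have "measure M {\<omega>\<in>space M. X \<omega> \<ge> t} \<le> c * t powr (-q)"
        using x0[of t] t0 by (simp add: q_def)
      also have "\<dots> \<le> C * t powr (-q)" by (intro mult_right_mono) (auto simp: C_def)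
      finally show ?thesis using same[of t] tq t_def by simp
    next
      case False
      have "measure M {\<omega>\<in>space M. X1 \<omega> \<ge> 2^k} \<le> 1" by simp
      also have "1 = x1 powr q * x1 powr (-q)" using x11 by (simp add: powr_minus)
      also have "\<dots> \<le> C * t powr (-q)"
      proof (intro mult_mono)
        show "x1 powr q \<le> C" unfolding C_def by simp
        show "x1 powr (-q) \<le> t powr (-q)" using False t0 q0 by (intro powr_mono2') auto
      qed (use C0 in auto)
      finally show ?thesis using tq by simp
    qed
  qed
  have bq1: "real (p-1) < q" using assms(10,11) by (simp add: q_def of_nat_diff)
  have bq2: "real (p+1) < q" using assms(10,11) by (simp add: q_def)
  obtain D1 where D10: "D1 > 0" and D1: "\<And>(n::nat) (f::'a\<Rightarrow>real). n \<ge> 1 \<Longrightarrow> f \<in> borel_measurable M \<Longrightarrow>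
     (\<And>\<omega>. \<omega> \<in> space M \<Longrightarrow> 0 \<le> f \<omega> \<and> f \<omega> \<le> min (X1 \<omega>) (real n) ^ (p+1) * X1 \<omega> ^ (p-1)) \<Longrightarrow>
     (\<integral>\<omega>. f \<omega> \<partial>M) \<le> D1 * (1 + (if real ((p+1)+(p-1)) - q < 0 then 1 else real n powr (real ((p+1)+(p-1)) - q) * (log 2 (real n) + 1))
        + real n powr (real ((p+1)+(p-1)) - q))"
    using main_bound[OF assms(1) X1m assms(7) tail bq1 C0, where a="p+1"] by blast
  obtain D2 where D20: "D2 > 0" and D2: "\<And>(n::nat) (f::'a\<Rightarrow>real). n \<ge> 1 \<Longrightarrow> f \<in> borel_measurable M \<Longrightarrow>
     (\<And>\<omega>. \<omega> \<in> space M \<Longrightarrow> 0 \<le> f \<omega> \<and> f \<omega> \<le> min (X1 \<omega>) (real n) ^ (p+1) * X1 \<omega> ^ (p+1)) \<Longrightarrow>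
     (\<integral>\<omega>. f \<omega> \<partial>M) \<le> D2 * (1 + (if real ((p+1)+(p+1)) - q < 0 then 1 else real n powr (real ((p+1)+(p+1)) - q) * (log 2 (real n) + 1))
        + real n powr (real ((p+1)+(p+1)) - q))"
    using main_bound[OF assms(1) X1m assms(7) tail bq2 C0, where a="p+1"] by blast
  define L :: real where "L = 1 / ln 2 + 1"
  have L1: "L \<ge> 1" unfolding L_def by simp
  have e1: "real ((p+1)+(p-1)) - q = real p - \<alpha>" using assms(10) by (simp add: q_def of_nat_diff)
  have e2: "real ((p+1)+(p+1)) - q = real p - \<alpha> + 2" by (simp add: q_def)
  show ?thesis
  proof
    show "(\<lambda>n::nat. integral\<^sup>L M (\<lambda>\<omega>. X1 \<omega> ^ (2*p) / (X1 \<omega> / real n + 1) ^ (p+1)))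
           \<in> O[at_top](\<lambda>n. real n powr (real p - \<alpha> + 2))"
    proof (rule landau_o.bigI[of "D1 * (2 + L)"])
      show "D1 * (2 + L) > 0" using D10 L1 by simp
      show "eventually (\<lambda>n. norm (integral\<^sup>L M (\<lambda>\<omega>. X1 \<omega> ^ (2*p) / (X1 \<omega> / real n + 1) ^ (p+1)))
             \<le> D1 * (2 + L) * norm (real n powr (real p - \<alpha> + 2))) at_top"
        unfolding eventually_at_top_linorder
      proof (intro exI[of _ 3] allI impI)
        fix n :: nat assume n3: "n \<ge> 3"
        define N where "N = real n"
        have N3: "N \<ge> 3" unfolding N_def using n3 by simp
        define s where "s = real p - \<alpha>"
        have s2: "s + 2 \<ge> 0" unfolding s_def using assms(12) by simp
        have fb: "0 \<le> X1 \<omega> ^ (2*p) / (X1 \<omega> / real n + 1) ^ (p+1) \<and>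
            X1 \<omega> ^ (2*p) / (X1 \<omega> / real n + 1) ^ (p+1) \<le> min (X1 \<omega>) (real n) ^ (p+1) * X1 \<omega> ^ (p-1)"
          if "\<omega> \<in> space M" for \<omega>
          using pw1[of "X1 \<omega>" "real n" p] assms(7,10) that n3 by auto
        have I: "integral\<^sup>L M (\<lambda>\<omega>. X1 \<omega> ^ (2*p) / (X1 \<omega> / real n + 1) ^ (p+1))
            \<le> D1 * (1 + (if s < 0 then 1 else N powr s * (log 2 N + 1)) + N powr s)"
          using D1[of n "\<lambda>\<omega>. X1 \<omega> ^ (2*p) / (X1 \<omega> / real n + 1) ^ (p+1)"] fb n3
          unfolding e1 s_def N_def by auto
        have I0: "0 \<le> integral\<^sup>L M (\<lambda>\<omega>. X1 \<omega> ^ (2*p) / (X1 \<omega> / real n + 1) ^ (p+1))"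
          by (rule Bochner_Integration.integral_nonneg) (use fb in auto)
        have P1: "1 \<le> N powr (s+2)" using N3 s2 by (intro ge_one_powr_ge_zero) auto
        have P2: "N powr s \<le> N powr (s+2)" using N3 by (intro powr_mono) auto
        have P3: "(if s < 0 then 1 else N powr s * (log 2 N + 1)) \<le> L * N powr (s+2)"
        proof (cases "s < 0")
          case True
          then show ?thesis using P1 L1
            by (simp add: order_trans[OF P1] mult_le_cancel_right1 less_le_not_le)
        next
          case False
          have lb: "log 2 N + 1 \<le> L * ln N" using log2_bound(1)[OF N3] by (simp add: L_def)
          have "N powr s * (log 2 N + 1) \<le> N powr s * (L * N)"
            using lb log2_bound(3)[OF N3] L1 by (intro mult_left_mono) (auto intro: order_trans)
          also have "\<dots> \<le> N powr s * (L * N powr 2)"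
            using N3 L1 by (intro mult_left_mono) (auto simp: power2_eq_square)
          also have "\<dots> = L * N powr (s+2)" using N3 by (simp add: powr_add)
          finally show ?thesis using False by simp
        qed
        have "integral\<^sup>L M (\<lambda>\<omega>. X1 \<omega> ^ (2*p) / (X1 \<omega> / real n + 1) ^ (p+1))
            \<le> D1 * (N powr (s+2) + L * N powr (s+2) + N powr (s+2))"
          using I P1 P2 P3 D10 by (smt (verit) mult_left_mono)
        also have "\<dots> = D1 * (2 + L) * N powr (s+2)" by (simp add: algebra_simps)
        finally show "norm (integral\<^sup>L M (\<lambda>\<omega>. X1 \<omega> ^ (2*p) / (X1 \<omega> / real n + 1) ^ (p+1)))
             \<le> D1 * (2 + L) * norm (real n powr (real p - \<alpha> + 2))"
          using I0 by (simp add: N_def s_def)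
      qed
    qed
  next
    show "(\<lambda>n::nat. integral\<^sup>L M (\<lambda>\<omega>. X1 \<omega> ^ (2*p) / (X1 \<omega> / real n + 1) ^ (p+1) * X1 \<omega> ^ 2))
           \<in> O[at_top](\<lambda>n. real n powr (real p - \<alpha> + 2) * ln (real n))"
    proof (rule landau_o.bigI[of "D2 * (2 + L)"])
      show "D2 * (2 + L) > 0" using D20 L1 by simp
      show "eventually (\<lambda>n. norm (integral\<^sup>L M (\<lambda>\<omega>. X1 \<omega> ^ (2*p) / (X1 \<omega> / real n + 1) ^ (p+1) * X1 \<omega> ^ 2))
             \<le> D2 * (2 + L) * norm (real n powr (real p - \<alpha> + 2) * ln (real n))) at_top"
        unfolding eventually_at_top_linorder
      proof (intro exI[of _ 3] allI impI)
        fix n :: nat assume n3: "n \<ge> 3"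
        define N where "N = real n"
        have N3: "N \<ge> 3" unfolding N_def using n3 by simp
        define s where "s = real p - \<alpha> + 2"
        have s0: "s \<ge> 0" unfolding s_def using assms(12) by simp
        have fb: "0 \<le> X1 \<omega> ^ (2*p) / (X1 \<omega> / real n + 1) ^ (p+1) * X1 \<omega> ^ 2 \<and>
            X1 \<omega> ^ (2*p) / (X1 \<omega> / real n + 1) ^ (p+1) * X1 \<omega> ^ 2 \<le> min (X1 \<omega>) (real n) ^ (p+1) * X1 \<omega> ^ (p+1)"
          if "\<omega> \<in> space M" for \<omega>
          using pw2[of "X1 \<omega>" "real n" p] assms(7,10) that n3 by auto
        have I: "integral\<^sup>L M (\<lambda>\<omega>. X1 \<omega> ^ (2*p) / (X1 \<omega> / real n + 1) ^ (p+1) * X1 \<omega> ^ 2)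
            \<le> D2 * (1 + (if s < 0 then 1 else N powr s * (log 2 N + 1)) + N powr s)"
          using D2[of n "\<lambda>\<omega>. X1 \<omega> ^ (2*p) / (X1 \<omega> / real n + 1) ^ (p+1) * X1 \<omega> ^ 2"] fb n3
          unfolding e2 s_def N_def by auto
        have I0: "0 \<le> integral\<^sup>L M (\<lambda>\<omega>. X1 \<omega> ^ (2*p) / (X1 \<omega> / real n + 1) ^ (p+1) * X1 \<omega> ^ 2)"
          by (rule Bochner_Integration.integral_nonneg) (use fb in auto)
        have ln1: "ln N \<ge> 1" by (rule log2_bound(2)[OF N3])
        have Ns: "N powr s \<ge> 1" using N3 s0 by (intro ge_one_powr_ge_zero) auto
        have P1: "1 \<le> N powr s * ln N" using Ns ln1
          by (metis mult_mono' mult_1_right zero_le_one)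
        have P2: "N powr s \<le> N powr s * ln N" using mult_left_mono[of 1 "ln N" "N powr s"] Ns ln1 by simp
        have P3: "(if s < 0 then 1 else N powr s * (log 2 N + 1)) \<le> L * (N powr s * ln N)"
        proof -
          have lb: "log 2 N + 1 \<le> L * ln N" using log2_bound(1)[OF N3] by (simp add: L_def)
          have "N powr s * (log 2 N + 1) \<le> N powr s * (L * ln N)"
            using lb by (intro mult_left_mono) auto
          then show ?thesis using s0 by (simp add: algebra_simps)
        qed
        have "integral\<^sup>L M (\<lambda>\<omega>. X1 \<omega> ^ (2*p) / (X1 \<omega> / real n + 1) ^ (p+1) * X1 \<omega> ^ 2)
            \<le> D2 * (N powr s * ln N + L * (N powr s * ln N) + N powr s * ln N)"
          using I P1 P2 P3 D20 by (smt (verit) mult_left_mono)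
        also have "\<dots> = D2 * (2 + L) * (N powr s * ln N)" by (simp add: algebra_simps)
        finally show "norm (integral\<^sup>L M (\<lambda>\<omega>. X1 \<omega> ^ (2*p) / (X1 \<omega> / real n + 1) ^ (p+1) * X1 \<omega> ^ 2))
             \<le> D2 * (2 + L) * norm (real n powr (real p - \<alpha> + 2) * ln (real n))"
          using I0 ln1 by (simp add: N_def s_def)
      qed
    qed
  qed
qed

end
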